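(* Let $X$ be a real Hilbert space, let $\alpha\in\mathbb{R}\setminus\{0\}$ and $\beta>0$, equip $X\times X\times\mathbb{R}$ with the norm $\|(u,v,\gamma)\|=\sqrt{\|u\|^2+\|v\|^2+\beta^2|\gamma|^2}$, and let $$\widetilde{C}_\alpha=\{(u,v,\gamma)\in X\times X\times\mathbb{R} : \|u\|^2-\|v\|^2=2\alpha\gamma\}.$$ Let $(u_0,v_0,\gamma_0)\in X\times X\times\mathbb{R}$. Then the following hold. (i) If $u_0\neq 0$ and $v_0\neq 0$, then $$P_{\widetilde{C}_\alpha}(u_0,v_0,\gamma_0)=\Big\{\Big(\frac{u_0}{1+\lambda},\frac{v_0}{1-\lambda},\gamma_0+\frac{\lambda\alpha}{\beta^2}\Big)\Big\},$$ where $\lambda$ is the unique solution in $]-1,1[$ of $$g(\lambda):=\frac{(\lambda^2+1)p-2\lambda q}{(1-\lambda^2)^2}-\frac{2\lambda\alpha^2}{\beta^2}-2\alpha\gamma_0=0,$$ with $p:=\|u_0\|^2-\|v_0\|^2$ and $q:=\|u_0\|^2+\|v_0\|^2$. (ii) If $u_0=0$ and $v_0\neq 0$: (a) if $\alpha(\gamma_0-\frac{\alpha}{\beta^2})<-\frac{\|v_0\|^2}{8}$, then $P_{\widetilde{C}_\alpha}(0,v_0,\gamma_0)=\{(0,\frac{v_0}{1-\lambda},\gamma_0+\frac{\lambda\alpha}{\beta^2})\}$ for the unique $\lambda\in]-1,1[$ solving $g_1(\lambda):=\frac{\|v_0\|^2}{(1-\lambda)^2}+\frac{2\lambda\alpha^2}{\beta^2}+2\alpha\gamma_0=0$;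 (b) if $\alpha(\gamma_0-\frac{\alpha}{\beta^2})\geq-\frac{\|v_0\|^2}{8}$, then $$P_{\widetilde{C}_\alpha}(0,v_0,\gamma_0)=\Big\{\Big(u,\frac{v_0}{2},\gamma_0-\frac{\alpha}{\beta^2}\Big): u\in X,\ \|u\|=\sqrt{2\alpha\big(\gamma_0-\tfrac{\alpha}{\beta^2}\big)+\tfrac{\|v_0\|^2}{4}}\Big\},$$ which is a singleton if and only if $\alpha(\gamma_0-\frac{\alpha}{\beta^2})=-\frac{\|v_0\|^2}{8}$. (iii) If $u_0\neq 0$ and $v_0=0$: (a) if $\alpha(\gamma_0+\frac{\alpha}{\beta^2})>\frac{\|u_0\|^2}{8}$, then $P_{\widetilde{C}_\alpha}(u_0,0,\gamma_0)=\{(\frac{u_0}{1+\lambda},0,\gamma_0+\frac{\lambda\alpha}{\beta^2})\}$ for the unique $\lambda\in]-1,1[$ solving $g_2(\lambda):=\frac{\|u_0\|^2}{(1+\lambda)^2}-\frac{2\lambda\alpha^2}{\beta^2}-2\alpha\gamma_0=0$; (b) if $\alpha(\gamma_0+\frac{\alpha}{\beta^2})\leq\frac{\|u_0\|^2}{8}$, then $$P_{\widetilde{C}_\alpha}(u_0,0,\gamma_0)=\Big\{\Big(\frac{u_0}{2},v,\gamma_0+\frac{\alpha}{\beta^2}\Big): v\in X,\ \|v\|=\sqrt{-2\alpha\big(\gamma_0+\tfrac{\alpha}{\beta^2}\big)+\tfrac{\|u_0\|^2}{4}}\Big\},$$ which is a singleton if and only if $\alpha(\gamma_0+\frac{\alpha}{\beta^2})=\frac{\|u_0\|^2}{8}$.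 (iv) If $u_0=0$ and $v_0=0$: (a) if $\alpha\gamma_0>\frac{\alpha^2}{\beta^2}$, then $P_{\widetilde{C}_\alpha}(0,0,\gamma_0)$ is the non-singleton set $\{(u,0,\gamma_0-\frac{\alpha}{\beta^2}): u\in X,\ \|u\|=\sqrt{2\alpha(\gamma_0-\frac{\alpha}{\beta^2})}\}$; (b) if $|\alpha\gamma_0|\leq\frac{\alpha^2}{\beta^2}$, then $P_{\widetilde{C}_\alpha}(0,0,\gamma_0)=\{(0,0,0)\}$; (c) if $\alpha\gamma_0<-\frac{\alpha^2}{\beta^2}$, then $P_{\widetilde{C}_\alpha}(0,0,\gamma_0)$ is the non-singleton set $\{(0,v,\gamma_0+\frac{\alpha}{\beta^2}): v\in X,\ \|v\|=\sqrt{-2\alpha(\gamma_0+\frac{\alpha}{\beta^2})}\}$.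
   Context: For a nonempty set $S\subseteq X\times X\times\mathbb{R}$, the projection $P_S(z)$ is the (possibly empty or multi-valued) set $\operatorname{argmin}_{w\in S}\|w-z\|$, where the norm is the $\beta$-weighted norm $\|(u,v,\gamma)\|=\sqrt{\|u\|^2+\|v\|^2+\beta^2|\gamma|^2}$. *)

theory Defs
  imports "HOL-Analysis.Analysis"
begin

definition bnorm :: "real \<Rightarrow> ('a::real_normed_vector) \<times> 'a \<times> real \<Rightarrow> real" where
  "bnorm \<beta> w = (case w of (u, v, \<gamma>) \<Rightarrow> sqrt (norm u ^ 2 + norm v ^ 2 + \<beta>^2 * \<bar>\<gamma>\<bar>^2))"

definition bdist :: "real \<Rightarrow> ('a::real_normed_vector) \<times> 'a \<times> real \<Rightarrow> 'a \<times> 'a \<times> real \<Rightarrow> real" where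
  "bdist \<beta> w z = (case w of (u, v, \<gamma>) \<Rightarrow> case z of (u', v', \<gamma>') \<Rightarrow> bnorm \<beta> (u - u', v - v', \<gamma> - \<gamma>'))"

definition bproj :: "real \<Rightarrow> (('a::real_normed_vector) \<times> 'a \<times> real) set \<Rightarrow> 'a \<times> 'a \<times> real \<Rightarrow> ('a \<times> 'a \<times> real) set" where
  "bproj \<beta> S z = {w \<in> S. \<forall>w'\<in>S. bdist \<beta> w z \<le> bdist \<beta> w' z}"

definition Ctilde :: "real \<Rightarrow> (('a::real_normed_vector) \<times> 'a \<times> real) set" where
  "Ctilde \<alpha> = {(u, v, \<gamma>). norm u ^ 2 - norm v ^ 2 = 2 * \<alpha> * \<gamma>}"

definition gfun :: "real \<Rightarrow> real \<Rightarrow> real \<Rightarrow> real \<Rightarrow> real \<Rightarrow> real \<Rightarrow> real" where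
  "gfun p q \<alpha> \<beta> \<gamma>0 lam =
     ((lam^2 + 1) * p - 2 * lam * q) / (1 - lam^2)^2 - 2 * lam * \<alpha>^2 / \<beta>^2 - 2 * \<alpha> * \<gamma>0"

definition g1fun :: "real \<Rightarrow> real \<Rightarrow> real \<Rightarrow> real \<Rightarrow> real \<Rightarrow> real" where
  "g1fun nv \<alpha> \<beta> \<gamma>0 lam = nv^2 / (1 - lam)^2 + 2 * lam * \<alpha>^2 / \<beta>^2 + 2 * \<alpha> * \<gamma>0"

definition g2fun :: "real \<Rightarrow> real \<Rightarrow> real \<Rightarrow> real \<Rightarrow> real \<Rightarrow> real" where
  "g2fun nu \<alpha> \<beta> \<gamma>0 lam = nu^2 / (1 + lam)^2 - 2 * lam * \<alpha>^2 / \<beta>^2 - 2 * \<alpha> * \<gamma>0"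

end

theory Submission
  imports Defs "HOL-Analysis.Analysis"
begin


lemma nd2: fixes x y :: "'a::real_inner"
  shows "(norm (x - y))^2 = (norm x)^2 + (norm y)^2 - 2 * (x \<bullet> y)"
  using dot_norm_neg[of x y] by simp

lemma alg_c: fixes A B I c::real assumes c: "c \<noteq> 0"
  shows "A + B - 2*I + (c - 1)*A = c*(A + B/c^2 - 2*I/c) + (B - B/c)"
proof -
  have "c*(A + B/c^2 - 2*I/c) = c*A + B/c - 2*I" using c by (simp add: algebra_simps power2_eq_square)
  then show ?thesis by (simp add: algebra_simps)
qed

lemma quad_u: fixes u u0 :: "'a::real_inner" and l :: real
  assumes "1 + l \<noteq> 0 \<or> u0 = 0"
  shows "(norm (u - u0))^2 + l * (norm u)^2
       = (1 + l) * (norm (u - u0 /\<^sub>R (1 + l)))^2 + ((norm u0)^2 - (norm u0)^2 / (1 + l))"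
proof (cases "u0 = 0")
  case True then show ?thesis by (simp add: algebra_simps)
next
  case False
  then have c: "1 + l \<noteq> 0" using assms by auto
  have h: "(norm (u - u0 /\<^sub>R (1 + l)))^2 = (norm u)^2 + (norm u0)^2 / (1+l)^2 - 2 * (u \<bullet> u0) / (1+l)"
  proof -
    have a: "(norm (u0 /\<^sub>R (1 + l)))^2 = (norm u0)^2/(1+l)^2"
      by (simp add: power_divide power_mult_distrib power_inverse divide_inverse)
    have b: "u \<bullet> (u0 /\<^sub>R (1 + l)) = (u \<bullet> u0)/(1+l)" by (simp add: divide_inverse)
    show ?thesis unfolding nd2[of u] a b by simp
  qed
  show ?thesis unfolding h nd2[of u u0] using alg_c[OF c, of "(norm u)^2" "(norm u0)^2" "u \<bullet> u0"] by simp
qed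

lemma quad_g: fixes \<beta> \<gamma> \<gamma>0 l \<alpha> :: real assumes "\<beta> \<noteq> 0"
  shows "\<beta>^2 * (\<gamma> - \<gamma>0)^2 - 2 * l * \<alpha> * \<gamma> = \<beta>^2 * (\<gamma> - (\<gamma>0 + l * \<alpha> / \<beta>^2))^2
     + (\<beta>^2 * \<gamma>0^2 - \<beta>^2 * (\<gamma>0 + l * \<alpha> / \<beta>^2)^2)"
  using assms by (simp add: field_simps power2_eq_square)

lemma bdist_sq: "(bdist \<beta> (u,v,\<gamma>) (u0,v0,\<gamma>0))^2 = (norm (u-u0))^2 + (norm (v-v0))^2 + \<beta>^2 * (\<gamma>-\<gamma>0)^2"
  unfolding bdist_def bnorm_def by (simp add: power2_abs)

lemma bdist_nn: "bdist \<beta> w z \<ge> 0"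
  unfolding bdist_def bnorm_def by (auto split: prod.splits)

lemma sq_le_iff: "(a::real) \<ge> 0 \<Longrightarrow> b \<ge> 0 \<Longrightarrow> a \<le> b \<longleftrightarrow> a^2 \<le> b^2"
  using power_mono power2_le_imp_le by metis

lemma proj_char:
  assumes "\<forall>w\<in>S. (bdist \<beta> w z)^2 = M + Q w" "\<forall>w. Q w \<ge> 0" "w0 \<in> S" "Q w0 = 0"
  shows "bproj \<beta> S z = {w\<in>S. Q w = 0}"
proof -
  have le: "bdist \<beta> w z \<le> bdist \<beta> w' z \<longleftrightarrow> Q w \<le> Q w'" if "w \<in> S" "w' \<in> S" for w w'
  proof -
    have "bdist \<beta> w z \<le> bdist \<beta> w' z \<longleftrightarrow> (bdist \<beta> w z)^2 \<le> (bdist \<beta> w' z)^2"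
      using bdist_nn[of \<beta> w z] bdist_nn[of \<beta> w' z] sq_le_iff by blast
    also have "\<dots> \<longleftrightarrow> Q w \<le> Q w'" using assms(1) that by simp
    finally show ?thesis .
  qed
  show ?thesis unfolding bproj_def
  proof (intro set_eqI iffI)
    fix w assume "w \<in> {w \<in> S. \<forall>w'\<in>S. bdist \<beta> w z \<le> bdist \<beta> w' z}"
    then have "w \<in> S" "\<forall>w'\<in>S. bdist \<beta> w z \<le> bdist \<beta> w' z" by auto
    then have "w \<in> S" "Q w \<le> Q w0" using le[of w w0] assms(3) by auto
    moreover have "Q w \<ge> 0" using assms(2) by blast
    ultimately show "w \<in> {w \<in> S. Q w = 0}" using assms(4) by simp
  next
    fix w assume "w \<in> {w \<in> S. Q w = 0}"
    then show "w \<in> {w \<in> S. \<forall>w'\<in>S. bdist \<beta> w z \<le> bdist \<beta> w' z}" using le assms(2) by auto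
  qed
qed

definition Qf :: "real \<Rightarrow> 'a::real_normed_vector \<Rightarrow> 'a \<Rightarrow> real \<Rightarrow> real \<Rightarrow> real \<Rightarrow> 'a \<times> 'a \<times> real \<Rightarrow> real" where
  "Qf l u0 v0 \<gamma>0 \<alpha> \<beta> w = (case w of (u,v,\<gamma>) \<Rightarrow>
     (1+l) * (norm (u - u0 /\<^sub>R (1+l)))^2 + (1-l) * (norm (v - v0 /\<^sub>R (1-l)))^2
     + \<beta>^2 * (\<gamma> - (\<gamma>0 + l * \<alpha> / \<beta>^2))^2)"

lemma Qf_nn: "-1 \<le> l \<Longrightarrow> l \<le> 1 \<Longrightarrow> Qf l u0 v0 \<gamma>0 \<alpha> \<beta> w \<ge> 0"
  unfolding Qf_def by (auto split: prod.splits intro!: add_nonneg_nonneg mult_nonneg_nonneg)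

lemma lagr:
  fixes u0 v0 :: "'a::real_inner" and w0 :: "'a \<times> 'a \<times> real"
  assumes \<beta>: "\<beta> > 0" and l: "-1 \<le> l" "l \<le> 1" and lu: "1+l \<noteq> 0 \<or> u0 = 0" and lv: "1-l \<noteq> 0 \<or> v0 = 0"
    and w0: "w0 \<in> Ctilde \<alpha>" "Qf l u0 v0 \<gamma>0 \<alpha> \<beta> w0 = 0"
  shows "bproj \<beta> (Ctilde \<alpha>) (u0,v0,\<gamma>0) = {w \<in> Ctilde \<alpha>. Qf l u0 v0 \<gamma>0 \<alpha> \<beta> w = 0}"
proof -
  let ?M = "((norm u0)^2 - (norm u0)^2 / (1 + l)) + ((norm v0)^2 - (norm v0)^2 / (1 + -l))
     + (\<beta>^2 * \<gamma>0^2 - \<beta>^2 * (\<gamma>0 + l * \<alpha> / \<beta>^2)^2)"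
  have A: "\<forall>w\<in>(Ctilde \<alpha> :: ('a \<times> 'a \<times> real) set). (bdist \<beta> w (u0, v0, \<gamma>0))^2 = ?M + Qf l u0 v0 \<gamma>0 \<alpha> \<beta> w"
  proof
    fix w :: "'a \<times> 'a \<times> real" assume "w \<in> Ctilde \<alpha>"
    then obtain u v \<gamma> where w: "w = (u,v,\<gamma>)" and C: "(norm u)^2 - (norm v)^2 = 2*\<alpha>*\<gamma>"
      unfolding Ctilde_def by auto
    have lv': "1 + -l \<noteq> 0 \<or> v0 = 0" using lv by simp
    have "(bdist \<beta> w (u0, v0, \<gamma>0))^2 = ((norm (u - u0))^2 + l * (norm u)^2)
       + ((norm (v - v0))^2 + (-l) * (norm v)^2) + (\<beta>^2 * (\<gamma> - \<gamma>0)^2 - 2 * l * \<alpha> * \<gamma>)"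
    proof -
      have "l * (norm u)^2 + (-l) * (norm v)^2 - 2 * l * \<alpha> * \<gamma> = l * ((norm u)^2 - (norm v)^2 - 2*\<alpha>*\<gamma>)"
        by (simp add: algebra_simps)
      also have "\<dots> = 0" using C by simp
      finally have z: "l * (norm u)^2 + (-l) * (norm v)^2 - 2 * l * \<alpha> * \<gamma> = 0" .
      show ?thesis unfolding w bdist_sq using z by linarith
    qed
    also have "\<dots> = ?M + Qf l u0 v0 \<gamma>0 \<alpha> \<beta> w"
      unfolding quad_u[OF lu] quad_u[OF lv'] quad_g[of \<beta>, OF order.strict_implies_not_eq[OF \<beta>, symmetric]]
      unfolding w Qf_def by simp
    finally show "(bdist \<beta> w (u0, v0, \<gamma>0))^2 = ?M + Qf l u0 v0 \<gamma>0 \<alpha> \<beta> w" .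
  qed
  have B: "\<forall>w. Qf l u0 v0 \<gamma>0 \<alpha> \<beta> w \<ge> 0" using Qf_nn l by blast
  show ?thesis by (rule proj_char[where M="?M", OF A B w0])
qed



lemma ns: "(norm (x /\<^sub>R c))^2 = (norm x)^2 / c^2"
  by (simp add: power_divide power_mult_distrib power_inverse divide_inverse)

lemma exists_norm: fixes r :: real
  assumes "\<exists>x::'a::real_normed_vector. x \<noteq> 0" "r \<ge> 0" shows "\<exists>u::'a. norm u = r"
proof -
  obtain x :: 'a where x: "x \<noteq> 0" using assms by blast
  have "norm ((r / norm x) *\<^sub>R x) = r" using x assms(2) by simp
  then show ?thesis by blast
qed

lemma sum3_zero: "(a::real) \<ge> 0 \<Longrightarrow> b \<ge> 0 \<Longrightarrow> c \<ge> 0 \<Longrightarrow> a + b + c = 0 \<longleftrightarrow> a = 0 \<and> b = 0 \<and> c = 0"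
  by linarith

lemma proj_int:
  fixes u0 v0 :: "'a::real_inner"
  assumes \<beta>: "\<beta> > 0" and l: "-1 < l" "l < 1"
    and C: "(u0 /\<^sub>R (1+l), v0 /\<^sub>R (1-l), \<gamma>0 + l * \<alpha> / \<beta>^2) \<in> (Ctilde \<alpha> :: ('a \<times> 'a \<times> real) set)"
  shows "bproj \<beta> (Ctilde \<alpha>) (u0,v0,\<gamma>0) = {(u0 /\<^sub>R (1+l), v0 /\<^sub>R (1-l), \<gamma>0 + l * \<alpha> / \<beta>^2)}"
proof -
  have Q0: "Qf l u0 v0 \<gamma>0 \<alpha> \<beta> (u0 /\<^sub>R (1+l), v0 /\<^sub>R (1-l), \<gamma>0 + l * \<alpha> / \<beta>^2) = 0"
    unfolding Qf_def by simp
  have eq: "bproj \<beta> (Ctilde \<alpha>) (u0,v0,\<gamma>0) = {w \<in> Ctilde \<alpha>. Qf l u0 v0 \<gamma>0 \<alpha> \<beta> w = 0}"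
    using lagr[OF \<beta>, of l u0 v0 _ \<alpha> \<gamma>0, OF _ _ _ _ C Q0] l by simp
  have iff: "Qf l u0 v0 \<gamma>0 \<alpha> \<beta> (u,v,\<gamma>) = 0 \<longleftrightarrow> (u,v,\<gamma>) = (u0 /\<^sub>R (1+l), v0 /\<^sub>R (1-l), \<gamma>0 + l * \<alpha> / \<beta>^2)" for u v \<gamma>
  proof -
    have "Qf l u0 v0 \<gamma>0 \<alpha> \<beta> (u,v,\<gamma>) = 0 \<longleftrightarrow>
      (1+l) * (norm (u - u0 /\<^sub>R (1+l)))^2 = 0 \<and> (1-l) * (norm (v - v0 /\<^sub>R (1-l)))^2 = 0
      \<and> \<beta>^2 * (\<gamma> - (\<gamma>0 + l * \<alpha> / \<beta>^2))^2 = 0"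
      unfolding Qf_def using l by (simp only: prod.case, intro sum3_zero) auto
    also have "\<dots> \<longleftrightarrow> (u,v,\<gamma>) = (u0 /\<^sub>R (1+l), v0 /\<^sub>R (1-l), \<gamma>0 + l * \<alpha> / \<beta>^2)"
      using l \<beta> by auto
    finally show ?thesis .
  qed
  show ?thesis unfolding eq using C iff by auto
qed

lemma proj_minus:
  fixes v0 :: "'a::real_inner"
  assumes nt: "\<exists>x::'a. x \<noteq> 0" and \<beta>: "\<beta> > 0"
    and R: "2 * \<alpha> * (\<gamma>0 - \<alpha> / \<beta>^2) + norm v0 ^ 2 / 4 \<ge> 0"
  shows "bproj \<beta> (Ctilde \<alpha>) (0,v0,\<gamma>0) = {(u, v0 /\<^sub>R 2, \<gamma>0 - \<alpha> / \<beta>^2) | u.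
              norm u = sqrt (2 * \<alpha> * (\<gamma>0 - \<alpha> / \<beta>^2) + norm v0 ^ 2 / 4)}"
proof -
  let ?R = "2 * \<alpha> * (\<gamma>0 - \<alpha> / \<beta>^2) + norm v0 ^ 2 / 4"
  have iffQ: "Qf (-1) 0 v0 \<gamma>0 \<alpha> \<beta> (u,v,\<gamma>) = 0 \<longleftrightarrow> v = v0 /\<^sub>R 2 \<and> \<gamma> = \<gamma>0 - \<alpha> / \<beta>^2" for u v \<gamma>
  proof -
    have "Qf (-1) 0 v0 \<gamma>0 \<alpha> \<beta> (u,v,\<gamma>) = 0 \<longleftrightarrow>
      2 * (norm (v - v0 /\<^sub>R 2))^2 = 0 \<and> \<beta>^2 * (\<gamma> - (\<gamma>0 - \<alpha> / \<beta>^2))^2 = 0"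
    proof -
      have e: "Qf (-1) 0 v0 \<gamma>0 \<alpha> \<beta> (u,v,\<gamma>) = 2 * (norm (v - v0 /\<^sub>R 2))^2 + \<beta>^2 * (\<gamma> - (\<gamma>0 - \<alpha> / \<beta>^2))^2"
        unfolding Qf_def by simp
      show ?thesis unfolding e by (rule add_nonneg_eq_0_iff) auto
    qed
    also have "\<dots> \<longleftrightarrow> v = v0 /\<^sub>R 2 \<and> \<gamma> = \<gamma>0 - \<alpha> / \<beta>^2" using \<beta> by auto
    finally show ?thesis .
  qed
  have inC: "(u, v0 /\<^sub>R 2, \<gamma>0 - \<alpha> / \<beta>^2) \<in> Ctilde \<alpha> \<longleftrightarrow> norm u = sqrt ?R" for u :: 'a
  proof -
    have "(u, v0 /\<^sub>R 2, \<gamma>0 - \<alpha> / \<beta>^2) \<in> Ctilde \<alpha> \<longleftrightarrow> (norm u)^2 = ?R"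
      unfolding Ctilde_def using ns[where x=v0 and c=2] by (auto simp: algebra_simps)
    also have "\<dots> \<longleftrightarrow> norm u = sqrt ?R" using R by (auto simp: real_sqrt_unique)
    finally show ?thesis .
  qed
  obtain u1 :: 'a where u1: "norm u1 = sqrt ?R" using exists_norm[OF nt, of "sqrt ?R"] R by auto
  have w0: "(u1, v0 /\<^sub>R 2, \<gamma>0 - \<alpha> / \<beta>^2) \<in> Ctilde \<alpha>" using inC u1 by blast
  have Q0: "Qf (-1) 0 v0 \<gamma>0 \<alpha> \<beta> (u1, v0 /\<^sub>R 2, \<gamma>0 - \<alpha> / \<beta>^2) = 0" using iffQ by blast
  have eq: "bproj \<beta> (Ctilde \<alpha>) (0,v0,\<gamma>0) = {w \<in> Ctilde \<alpha>. Qf (-1) 0 v0 \<gamma>0 \<alpha> \<beta> w = 0}"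
    by (rule lagr[OF \<beta> _ _ _ _ w0 Q0]) auto
  show ?thesis unfolding eq
  proof (intro set_eqI iffI)
    fix w :: "'a \<times> 'a \<times> real"
    assume "w \<in> {w \<in> Ctilde \<alpha>. Qf (-1) 0 v0 \<gamma>0 \<alpha> \<beta> w = 0}"
    then show "w \<in> {(u, v0 /\<^sub>R 2, \<gamma>0 - \<alpha> / \<beta>^2) | u. norm u = sqrt ?R}"
      using iffQ inC by (cases w) auto
  next
    fix w :: "'a \<times> 'a \<times> real"
    assume "w \<in> {(u, v0 /\<^sub>R 2, \<gamma>0 - \<alpha> / \<beta>^2) | u. norm u = sqrt ?R}"
    then show "w \<in> {w \<in> Ctilde \<alpha>. Qf (-1) 0 v0 \<gamma>0 \<alpha> \<beta> w = 0}"
      using iffQ inC by auto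
  qed
qed

lemma proj_plus:
  fixes u0 :: "'a::real_inner"
  assumes nt: "\<exists>x::'a. x \<noteq> 0" and \<beta>: "\<beta> > 0"
    and R: "- 2 * \<alpha> * (\<gamma>0 + \<alpha> / \<beta>^2) + norm u0 ^ 2 / 4 \<ge> 0"
  shows "bproj \<beta> (Ctilde \<alpha>) (u0,0,\<gamma>0) = {(u0 /\<^sub>R 2, v, \<gamma>0 + \<alpha> / \<beta>^2) | v.
              norm v = sqrt (- 2 * \<alpha> * (\<gamma>0 + \<alpha> / \<beta>^2) + norm u0 ^ 2 / 4)}"
proof -
  let ?R = "- 2 * \<alpha> * (\<gamma>0 + \<alpha> / \<beta>^2) + norm u0 ^ 2 / 4"
  have iffQ: "Qf 1 u0 0 \<gamma>0 \<alpha> \<beta> (u,v,\<gamma>) = 0 \<longleftrightarrow> u = u0 /\<^sub>R 2 \<and> \<gamma> = \<gamma>0 + \<alpha> / \<beta>^2" for u v \<gamma>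
  proof -
    have "Qf 1 u0 0 \<gamma>0 \<alpha> \<beta> (u,v,\<gamma>) = 0 \<longleftrightarrow>
      2 * (norm (u - u0 /\<^sub>R 2))^2 = 0 \<and> \<beta>^2 * (\<gamma> - (\<gamma>0 + \<alpha> / \<beta>^2))^2 = 0"
    proof -
      have e: "Qf 1 u0 0 \<gamma>0 \<alpha> \<beta> (u,v,\<gamma>) = 2 * (norm (u - u0 /\<^sub>R 2))^2 + \<beta>^2 * (\<gamma> - (\<gamma>0 + \<alpha> / \<beta>^2))^2"
        unfolding Qf_def by simp
      show ?thesis unfolding e by (rule add_nonneg_eq_0_iff) auto
    qed
    also have "\<dots> \<longleftrightarrow> u = u0 /\<^sub>R 2 \<and> \<gamma> = \<gamma>0 + \<alpha> / \<beta>^2" using \<beta> by auto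
    finally show ?thesis .
  qed
  have inC: "(u0 /\<^sub>R 2, v, \<gamma>0 + \<alpha> / \<beta>^2) \<in> Ctilde \<alpha> \<longleftrightarrow> norm v = sqrt ?R" for v :: 'a
  proof -
    have n: "(norm (u0 /\<^sub>R 2))^2 = (norm u0)^2/4" by (simp add: power_divide)
    have "(u0 /\<^sub>R 2, v, \<gamma>0 + \<alpha> / \<beta>^2) \<in> Ctilde \<alpha> \<longleftrightarrow> (norm (u0 /\<^sub>R 2))^2 - (norm v)^2 = 2*\<alpha>*(\<gamma>0 + \<alpha> / \<beta>^2)"
      unfolding Ctilde_def by simp
    also have "\<dots> \<longleftrightarrow> (norm v)^2 = ?R" unfolding n by (auto simp: algebra_simps)
    also have "\<dots> \<longleftrightarrow> norm v = sqrt ?R" using R by (auto simp: real_sqrt_unique)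
    finally show ?thesis .
  qed
  obtain v1 :: 'a where v1: "norm v1 = sqrt ?R" using exists_norm[OF nt, of "sqrt ?R"] R by auto
  have w0: "(u0 /\<^sub>R 2, v1, \<gamma>0 + \<alpha> / \<beta>^2) \<in> Ctilde \<alpha>" using inC v1 by blast
  have Q0: "Qf 1 u0 0 \<gamma>0 \<alpha> \<beta> (u0 /\<^sub>R 2, v1, \<gamma>0 + \<alpha> / \<beta>^2) = 0" using iffQ by blast
  have eq: "bproj \<beta> (Ctilde \<alpha>) (u0,0,\<gamma>0) = {w \<in> Ctilde \<alpha>. Qf 1 u0 0 \<gamma>0 \<alpha> \<beta> w = 0}"
    by (rule lagr[OF \<beta> _ _ _ _ w0 Q0]) auto
  show ?thesis unfolding eq
  proof (intro set_eqI iffI)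
    fix w :: "'a \<times> 'a \<times> real"
    assume "w \<in> {w \<in> Ctilde \<alpha>. Qf 1 u0 0 \<gamma>0 \<alpha> \<beta> w = 0}"
    then show "w \<in> {(u0 /\<^sub>R 2, v, \<gamma>0 + \<alpha> / \<beta>^2) | v. norm v = sqrt ?R}"
      using iffQ inC by (cases w) auto
  next
    fix w :: "'a \<times> 'a \<times> real"
    assume "w \<in> {(u0 /\<^sub>R 2, v, \<gamma>0 + \<alpha> / \<beta>^2) | v. norm v = sqrt ?R}"
    then show "w \<in> {w \<in> Ctilde \<alpha>. Qf 1 u0 0 \<gamma>0 \<alpha> \<beta> w = 0}"
      using iffQ inC by auto
  qed
qed

lemma proj_zero:
  assumes \<beta>: "\<beta> > 0" and \<alpha>: "\<alpha> \<noteq> 0" and c: "\<bar>\<alpha> * \<gamma>0\<bar> \<le> \<alpha>^2 / \<beta>^2"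
  shows "bproj \<beta> (Ctilde \<alpha> :: ('a::real_inner \<times> 'a \<times> real) set) (0,0,\<gamma>0) = {(0,0,0)}"
proof -
  define l where "l = - \<gamma>0 * \<beta>^2 / \<alpha>"
  have g: "\<gamma>0 + l * \<alpha> / \<beta>^2 = 0" unfolding l_def using \<alpha> \<beta> by (simp add: field_simps)
  have "\<bar>\<gamma>0\<bar> * \<beta>^2 \<le> \<bar>\<alpha>\<bar>"
  proof -
    have "\<bar>\<alpha>\<bar> * \<bar>\<gamma>0\<bar> \<le> \<bar>\<alpha>\<bar> * \<bar>\<alpha>\<bar> / \<beta>^2" using c by (simp add: abs_mult power2_eq_square)
    then have "\<bar>\<alpha>\<bar> * (\<bar>\<gamma>0\<bar> * \<beta>^2) \<le> \<bar>\<alpha>\<bar> * \<bar>\<alpha>\<bar>" using \<beta> by (simp add: field_simps)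
    moreover have "\<alpha> * \<alpha> = \<bar>\<alpha>\<bar> * \<bar>\<alpha>\<bar>" by simp
    ultimately show ?thesis using \<alpha> by (metis mult_le_cancel_left_pos zero_less_abs_iff)
  qed
  then have "\<bar>l\<bar> \<le> 1" unfolding l_def using \<alpha> \<beta> by (simp add: abs_mult abs_divide field_simps)
  then have l: "-1 \<le> l" "l \<le> 1" by auto
  have Qe: "Qf l 0 0 \<gamma>0 \<alpha> \<beta> (u,v,\<gamma>) = (1+l) * (norm u)^2 + (1-l) * (norm v)^2 + \<beta>^2 * \<gamma>^2" for u v :: 'a and \<gamma>
    unfolding Qf_def g by simp
  have w0: "((0::'a),(0::'a),0::real) \<in> Ctilde \<alpha>" unfolding Ctilde_def by simp
  have Q0: "Qf l 0 0 \<gamma>0 \<alpha> \<beta> ((0::'a),(0::'a),0::real) = 0" unfolding Qe by simp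
  have eq: "bproj \<beta> (Ctilde \<alpha>) ((0::'a),0,\<gamma>0) = {w \<in> Ctilde \<alpha>. Qf l 0 0 \<gamma>0 \<alpha> \<beta> w = 0}"
    by (rule lagr[OF \<beta> l _ _ w0 Q0]) auto
  show ?thesis unfolding eq
  proof (intro set_eqI iffI)
    fix w :: "'a \<times> 'a \<times> real"
    assume "w \<in> {w \<in> Ctilde \<alpha>. Qf l 0 0 \<gamma>0 \<alpha> \<beta> w = 0}"
    then obtain u v \<gamma> where w: "w = (u,v,\<gamma>)" and C: "(norm u)^2 - (norm v)^2 = 2*\<alpha>*\<gamma>"
      and Q: "(1+l) * (norm u)^2 + (1-l) * (norm v)^2 + \<beta>^2 * \<gamma>^2 = 0"
      unfolding Ctilde_def by (auto simp: Qe)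
    have a: "(1+l) * (norm u)^2 \<ge> 0" "(1-l) * (norm v)^2 \<ge> 0" "\<beta>^2 * \<gamma>^2 \<ge> 0" using l by auto
    then have "\<beta>^2 * \<gamma>^2 = 0" using Q by linarith
    then have g0: "\<gamma> = 0" using \<beta> by simp
    then have "(norm u)^2 = (norm v)^2" using C by simp
    then have "2 * (norm u)^2 = 0" using Q g0 by (simp add: algebra_simps)
    then have "u = 0" "v = 0" using \<open>(norm u)^2 = (norm v)^2\<close> by auto
    then show "w \<in> {(0,0,0)}" using w g0 by simp
  next
    fix w :: "'a \<times> 'a \<times> real"
    assume "w \<in> {(0,0,0)}"
    then show "w \<in> {w \<in> Ctilde \<alpha>. Qf l 0 0 \<gamma>0 \<alpha> \<beta> w = 0}" using w0 Q0 by simp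
  qed
qed

lemma sph1:
  assumes nt: "\<exists>x::'a::real_normed_vector. x \<noteq> 0" and r: "r \<ge> 0"
  shows "(\<exists>w. {(u, c, d) | u::'a. norm u = r} = {w}) \<longleftrightarrow> r = 0"
proof
  assume "\<exists>w. {(u, c, d) | u::'a. norm u = r} = {w}"
  then obtain w where w: "{(u, c, d) | u::'a. norm u = r} = {w}" by blast
  show "r = 0"
  proof (rule ccontr)
    assume "r \<noteq> 0"
    obtain u :: 'a where u: "norm u = r" using exists_norm[OF nt r] by blast
    have "(u,c,d) \<in> {w}" "(-u,c,d) \<in> {w}" unfolding w[symmetric] using u by auto
    then have "(u,c,d) = (-u,c,d)" by simp
    then have "u = -u" by simp
    then have "u + u = 0" by (simp add: eq_neg_iff_add_eq_0)
    then have "(2::real) *\<^sub>R u = 0" by (simp add: scaleR_2)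
    then have "u = 0" by simp
    then show False using u \<open>r \<noteq> 0\<close> by simp
  qed
next
  assume "r = 0"
  then have "{(u, c, d) | u::'a. norm u = r} = {(0,c,d)}" by auto
  then show "\<exists>w. {(u, c, d) | u::'a. norm u = r} = {w}" by blast
qed

lemma sph2:
  assumes nt: "\<exists>x::'a::real_normed_vector. x \<noteq> 0" and r: "r \<ge> 0"
  shows "(\<exists>w. {(c, v, d) | v::'a. norm v = r} = {w}) \<longleftrightarrow> r = 0"
proof
  assume "\<exists>w. {(c, v, d) | v::'a. norm v = r} = {w}"
  then obtain w where w: "{(c, v, d) | v::'a. norm v = r} = {w}" by blast
  show "r = 0"
  proof (rule ccontr)
    assume "r \<noteq> 0"
    obtain u :: 'a where u: "norm u = r" using exists_norm[OF nt r] by blast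
    have "(c,u,d) \<in> {w}" "(c,-u,d) \<in> {w}" unfolding w[symmetric] using u by auto
    then have "(c,u,d) = (c,-u,d)" by simp
    then have "u = -u" by simp
    then have "u + u = 0" by (simp add: eq_neg_iff_add_eq_0)
    then have "(2::real) *\<^sub>R u = 0" by (simp add: scaleR_2)
    then have "u = 0" by simp
    then show False using u \<open>r \<noteq> 0\<close> by simp
  qed
next
  assume "r = 0"
  then have "{(c, v, d) | v::'a. norm v = r} = {(c,0,d)}" by auto
  then show "\<exists>w. {(c, v, d) | v::'a. norm v = r} = {w}" by blast
qed



lemma root_incr:
  fixes f :: "real \<Rightarrow> real"
  assumes mono: "\<And>x y. -1 < x \<Longrightarrow> x < y \<Longrightarrow> y < 1 \<Longrightarrow> f x < f y"
    and x0: "-1 \<le> x0" "x0 < y0" "y0 < 1" "f x0 < 0" "0 < f y0"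
    and cont: "\<And>t. x0 \<le> t \<Longrightarrow> t \<le> y0 \<Longrightarrow> isCont f t"
  shows "\<exists>!l. l \<in> {-1<..<1} \<and> f l = 0"
proof -
  obtain t where t: "x0 \<le> t" "t \<le> y0" "f t = 0" using IVT[of f x0 0 y0] x0 cont by auto
  have "t \<noteq> x0" using t x0 by auto
  then have tin: "t \<in> {-1<..<1}" using t x0 by auto
  show ?thesis
  proof (rule ex1I[of _ t])
    show "t \<in> {-1<..<1} \<and> f t = 0" using tin t by simp
    fix l assume l: "l \<in> {-1<..<1} \<and> f l = 0"
    show "l = t"
    proof (rule ccontr)
      assume "l \<noteq> t"
      then consider "l < t" | "t < l" by linarith
      then show False using mono[of l t] mono[of t l] l tin t by cases auto
    qed
  qed
qed

lemma root_decr: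
  fixes f :: "real \<Rightarrow> real"
  assumes mono: "\<And>x y. -1 < x \<Longrightarrow> x < y \<Longrightarrow> y < 1 \<Longrightarrow> f y < f x"
    and x0: "-1 < x0" "x0 < y0" "y0 \<le> 1" "0 < f x0" "f y0 < 0"
    and cont: "\<And>t. x0 \<le> t \<Longrightarrow> t \<le> y0 \<Longrightarrow> isCont f t"
  shows "\<exists>!l. l \<in> {-1<..<1} \<and> f l = 0"
proof -
  obtain t where t: "x0 \<le> t" "t \<le> y0" "f t = 0" using IVT2[of f y0 0 x0] x0 cont by auto
  have "t \<noteq> y0" using t x0 by auto
  then have tin: "t \<in> {-1<..<1}" using t x0 by auto
  show ?thesis
  proof (rule ex1I[of _ t])
    show "t \<in> {-1<..<1} \<and> f t = 0" using tin t by simp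
    fix l assume l: "l \<in> {-1<..<1} \<and> f l = 0"
    show "l = t"
    proof (rule ccontr)
      assume "l \<noteq> t"
      then consider "l < t" | "t < l" by linarith
      then show False using mono[of l t] mono[of t l] l tin t by cases auto
    qed
  qed
qed

lemma big:
  fixes c K :: real
  assumes c: "c > 0" and K: "K \<ge> 0"
  shows "min (1/2) (c/(K+1)) > 0" "min (1/2) (c/(K+1)) \<le> 1/2" "c / (min (1/2) (c/(K+1)))^2 \<ge> K + 1"
proof -
  let ?t = "min (1/2) (c/(K+1))"
  show t0: "?t > 0" using c K by simp
  show t1: "?t \<le> 1/2" by (rule min.cobounded1)
  have "?t \<le> c/(K+1)" by (rule min.cobounded2)
  then have "?t * (K+1) \<le> c" using K by (simp add: le_divide_eq)
  then have h: "c / ?t \<ge> K + 1" using t0 by (simp add: field_simps)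
  have "c / ?t \<le> (c / ?t) / ?t" using t0 t1 c
    by (simp add: le_divide_eq)
  then show "c / ?t^2 \<ge> K + 1" using h by (simp add: power2_eq_square)
qed

lemma sqdiv_mono:
  fixes c x y :: real
  assumes "c > 0" "0 < x" "x < y"
  shows "c / y^2 < c / x^2"
proof -
  have "x^2 < y^2" using assms by (simp add: power_strict_mono)
  then show ?thesis using assms by (simp add: divide_strict_left_mono)
qed

lemma gfun_eq:
  fixes a b l :: real
  assumes l: "-1 < l" "l < 1"
  shows "gfun (a^2 - b^2) (a^2 + b^2) \<alpha> \<beta> \<gamma>0 l = a^2/(1+l)^2 - b^2/(1-l)^2 - 2*l*\<alpha>^2/\<beta>^2 - 2*\<alpha>*\<gamma>0"
proof -
  have n1: "1 + l \<noteq> 0" and n2: "1 - l \<noteq> 0" using l by auto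
  have d: "(1 - l^2)^2 = (1+l)^2 * (1-l)^2" by (simp add: power2_eq_square algebra_simps)
  have e: "(l^2 + 1) * (a^2 - b^2) - 2 * l * (a^2 + b^2) = a^2 * (1-l)^2 - b^2 * (1+l)^2"
    by (simp add: power2_eq_square algebra_simps)
  have "((l^2 + 1) * (a^2 - b^2) - 2 * l * (a^2 + b^2)) / (1 - l^2)^2 = a^2/(1+l)^2 - b^2/(1-l)^2"
    unfolding d e using n1 n2 by (simp add: diff_divide_distrib)
  then show ?thesis unfolding gfun_def by simp
qed

lemma lin_mono: "(x::real) \<le> y \<Longrightarrow> 2*x*\<alpha>^2/\<beta>^2 \<le> 2*y*\<alpha>^2/\<beta>^2"
  by (intro divide_right_mono mult_right_mono) auto

lemma lin_sign: "(x::real) \<le> 0 \<Longrightarrow> 2*x*\<alpha>^2/\<beta>^2 \<le> 0" "(x::real) \<ge> 0 \<Longrightarrow> 2*x*\<alpha>^2/\<beta>^2 \<ge> 0"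
  using lin_mono[of x 0 \<alpha> \<beta>] lin_mono[of 0 x \<alpha> \<beta>] by auto

lemma sq_ge1: "(c::real) \<ge> 0 \<Longrightarrow> x \<ge> 1 \<Longrightarrow> c / x^2 \<le> c"
proof -
  assume c: "c \<ge> 0" and x: "x \<ge> 1"
  have "1 \<le> x^2" using x by (metis one_le_power)
  then show "c / x^2 \<le> c" using c by (simp add: divide_le_eq mult_le_cancel_left1)
qed

lemma ex1_transfer: assumes "\<exists>!l. l\<in>I \<and> f l = (0::real)" "\<forall>l\<in>I. g l = f l"
  shows "\<exists>!l. l\<in>I \<and> g l = 0"
proof -
  obtain l where l: "l\<in>I" "f l = 0" and u: "\<And>m. m\<in>I \<and> f m = 0 \<Longrightarrow> m = l" using assms(1) by blast
  show ?thesis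
  proof (rule ex1I[of _ l])
    show "l\<in>I \<and> g l = 0" using l assms(2) by simp
    fix m assume "m\<in>I \<and> g m = 0" then show "m = l" using u assms(2) by metis
  qed
qed

lemma rootI:
  fixes a b :: real
  assumes a: "a > 0" and b: "b > 0" and \<beta>: "\<beta> > 0"
  shows "\<exists>!l. l \<in> {-1<..<1} \<and> gfun (a^2 - b^2) (a^2 + b^2) \<alpha> \<beta> \<gamma>0 l = 0"
proof -
  define f where "f = (\<lambda>l::real. a^2/(1+l)^2 - b^2/(1-l)^2 - 2*l*\<alpha>^2/\<beta>^2 - 2*\<alpha>*\<gamma>0)"
  define K1 where "K1 = b^2 + 2*\<bar>\<alpha>*\<gamma>0\<bar>"
  define K2 where "K2 = a^2 + 2*\<bar>\<alpha>*\<gamma>0\<bar>"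
  define t where "t = min (1/2) (a^2/(K1+1))"
  define s where "s = min (1/2) (b^2/(K2+1))"
  have K: "K1 \<ge> 0" "K2 \<ge> 0" unfolding K1_def K2_def by auto
  have a2: "a^2 > 0" and b2: "b^2 > 0" using a b by auto
  note bt = big[OF a2 K(1), folded t_def]
  note bs = big[OF b2 K(2), folded s_def]
  have ex: "\<exists>!l. l \<in> {-1<..<1} \<and> f l = 0"
  proof (rule root_decr[of f "t - 1" "1 - s"])
    fix x y :: real assume xy: "-1 < x" "x < y" "y < 1"
    have "a^2/(1+y)^2 < a^2/(1+x)^2" using sqdiv_mono[OF a2, of "1+x" "1+y"] xy by simp
    moreover have "b^2/(1-x)^2 < b^2/(1-y)^2" using sqdiv_mono[OF b2, of "1-y" "1-x"] xy by simp
    moreover have "2*x*\<alpha>^2/\<beta>^2 \<le> 2*y*\<alpha>^2/\<beta>^2" using lin_mono xy by auto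
    ultimately show "f y < f x" unfolding f_def by linarith
  next
    show "-1 < t - 1" "t - 1 < 1 - s" "1 - s \<le> 1" using bt bs by auto
  next
    have "a^2/(1 + (t-1))^2 \<ge> K1 + 1" using bt by simp
    moreover have "b^2/(1 - (t-1))^2 \<le> b^2" using bt by (intro sq_ge1) auto
    moreover have "2*(t-1)*\<alpha>^2/\<beta>^2 \<le> 0" using bt by (intro lin_sign) auto
    moreover have "- 2*\<alpha>*\<gamma>0 \<ge> - 2*\<bar>\<alpha>*\<gamma>0\<bar>" by (simp add: abs_ge_self mult.assoc)
    ultimately show "0 < f (t - 1)" unfolding f_def K1_def by linarith
  next
    have "b^2/(1 - (1 - s))^2 \<ge> K2 + 1" using bs by simp
    moreover have "a^2/(1 + (1 - s))^2 \<le> a^2" using bs by (intro sq_ge1) auto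
    moreover have "2*(1-s)*\<alpha>^2/\<beta>^2 \<ge> 0" using bs by (intro lin_sign) auto
    moreover have "- 2*\<alpha>*\<gamma>0 \<le> 2*\<bar>\<alpha>*\<gamma>0\<bar>" by (simp add: mult.assoc)
    ultimately show "f (1 - s) < 0" unfolding f_def K2_def by linarith
  next
    fix x assume "t - 1 \<le> x" "x \<le> 1 - s"
    then have "1 + x \<noteq> 0" "1 - x \<noteq> 0" using bt bs by auto
    then show "isCont f x" unfolding f_def using \<beta> by (intro continuous_intros) auto
  qed
  have "\<forall>l\<in>{-1<..<1}. gfun (a^2 - b^2) (a^2 + b^2) \<alpha> \<beta> \<gamma>0 l = f l"
    using gfun_eq unfolding f_def by auto
  then show ?thesis by (rule ex1_transfer[OF ex])
qed

lemma root1: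
  fixes b :: real
  assumes b: "b > 0" and \<beta>: "\<beta> > 0" and c: "\<alpha> * (\<gamma>0 - \<alpha> / \<beta>^2) < - (b^2) / 8"
  shows "\<exists>!l. l \<in> {-1<..<1} \<and> g1fun b \<alpha> \<beta> \<gamma>0 l = 0"
proof -
  define f where "f = g1fun b \<alpha> \<beta> \<gamma>0"
  define K where "K = 2*\<bar>\<alpha>*\<gamma>0\<bar>"
  define s where "s = min (1/2) (b^2/(K+1))"
  have K: "K \<ge> 0" unfolding K_def by auto
  have b2: "b^2 > 0" using b by auto
  note bs = big[OF b2 K, folded s_def]
  have e: "\<alpha> * (\<gamma>0 - \<alpha> / \<beta>^2) = \<alpha>*\<gamma>0 - \<alpha>^2/\<beta>^2" by (simp add: power2_eq_square algebra_simps)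
  show ?thesis unfolding f_def[symmetric]
  proof (rule root_incr[of f "-1" "1 - s"])
    fix x y :: real assume xy: "-1 < x" "x < y" "y < 1"
    have "b^2/(1-x)^2 < b^2/(1-y)^2" using sqdiv_mono[OF b2, of "1-y" "1-x"] xy by simp
    moreover have "2*x*\<alpha>^2/\<beta>^2 \<le> 2*y*\<alpha>^2/\<beta>^2" using lin_mono xy by auto
    ultimately show "f x < f y" unfolding f_def g1fun_def by linarith
  next
    show "-1 \<le> (-1::real)" "-1 < 1 - s" "1 - s < 1" using bs by auto
  next
    have "f (-1) = b^2/4 + 2 * (\<alpha>*\<gamma>0 - \<alpha>^2/\<beta>^2)" unfolding f_def g1fun_def by simp
    then show "f (-1) < 0" using c unfolding e by simp
  next
    have "b^2/(1 - (1 - s))^2 \<ge> K + 1" using bs by simp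
    moreover have "2*(1-s)*\<alpha>^2/\<beta>^2 \<ge> 0" using bs by (intro lin_sign) auto
    moreover have "2*\<alpha>*\<gamma>0 \<ge> - 2*\<bar>\<alpha>*\<gamma>0\<bar>" by (simp add: mult.assoc)
    ultimately show "0 < f (1 - s)" unfolding f_def g1fun_def K_def by linarith
  next
    fix x assume "-1 \<le> x" "x \<le> 1 - s"
    then have "1 - x \<noteq> 0" using bs by auto
    then show "isCont f x" unfolding f_def g1fun_def using \<beta> by (intro continuous_intros) auto
  qed
qed

lemma root2:
  fixes a :: real
  assumes a: "a > 0" and \<beta>: "\<beta> > 0" and c: "\<alpha> * (\<gamma>0 + \<alpha> / \<beta>^2) > a^2 / 8"
  shows "\<exists>!l. l \<in> {-1<..<1} \<and> g2fun a \<alpha> \<beta> \<gamma>0 l = 0"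
proof -
  define f where "f = g2fun a \<alpha> \<beta> \<gamma>0"
  define K where "K = 2*\<bar>\<alpha>*\<gamma>0\<bar>"
  define t where "t = min (1/2) (a^2/(K+1))"
  have K: "K \<ge> 0" unfolding K_def by auto
  have a2: "a^2 > 0" using a by auto
  note bt = big[OF a2 K, folded t_def]
  have e: "\<alpha> * (\<gamma>0 + \<alpha> / \<beta>^2) = \<alpha>*\<gamma>0 + \<alpha>^2/\<beta>^2" by (simp add: power2_eq_square algebra_simps)
  show ?thesis unfolding f_def[symmetric]
  proof (rule root_decr[of f "t - 1" 1])
    fix x y :: real assume xy: "-1 < x" "x < y" "y < 1"
    have "a^2/(1+y)^2 < a^2/(1+x)^2" using sqdiv_mono[OF a2, of "1+x" "1+y"] xy by simp
    moreover have "2*x*\<alpha>^2/\<beta>^2 \<le> 2*y*\<alpha>^2/\<beta>^2" using lin_mono xy by auto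
    ultimately show "f y < f x" unfolding f_def g2fun_def by linarith
  next
    show "-1 < t - 1" "t - 1 < 1" "1 \<le> (1::real)" using bt by auto
  next
    have "f 1 = a^2/4 - 2 * (\<alpha>*\<gamma>0 + \<alpha>^2/\<beta>^2)" unfolding f_def g2fun_def by simp
    then show "f 1 < 0" using c unfolding e by simp
  next
    have "a^2/(1 + (t - 1))^2 \<ge> K + 1" using bt by simp
    moreover have "2*(t-1)*\<alpha>^2/\<beta>^2 \<le> 0" using bt by (intro lin_sign) auto
    moreover have "- 2*\<alpha>*\<gamma>0 \<ge> - 2*\<bar>\<alpha>*\<gamma>0\<bar>" by (simp add: abs_ge_self mult.assoc)
    ultimately show "0 < f (t - 1)" unfolding f_def g2fun_def K_def by linarith
  next
    fix x assume "t - 1 \<le> x" "x \<le> 1"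
    then have "1 + x \<noteq> 0" using bt by auto
    then show "isCont f x" unfolding f_def g2fun_def using \<beta> by (intro continuous_intros) auto
  qed
qed



lemma partI:
  fixes u0 v0 :: "'a::real_inner"
  assumes \<beta>: "\<beta> > 0" and nz: "u0 \<noteq> 0" "v0 \<noteq> 0"
  shows "(\<exists>!lam. lam \<in> {-1<..<1} \<and> gfun (norm u0 ^ 2 - norm v0 ^ 2) (norm u0 ^ 2 + norm v0 ^ 2) \<alpha> \<beta> \<gamma>0 lam = 0) \<and>
        (\<forall>lam. lam \<in> {-1<..<1} \<and> gfun (norm u0 ^ 2 - norm v0 ^ 2) (norm u0 ^ 2 + norm v0 ^ 2) \<alpha> \<beta> \<gamma>0 lam = 0 \<longrightarrow>
           bproj \<beta> (Ctilde \<alpha> :: ('a \<times> 'a \<times> real) set) (u0, v0, \<gamma>0) = {(u0 /\<^sub>R (1 + lam), v0 /\<^sub>R (1 - lam), \<gamma>0 + lam * \<alpha> / \<beta>^2)})"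
proof
  show "\<exists>!lam. lam \<in> {-1<..<1} \<and> gfun (norm u0 ^ 2 - norm v0 ^ 2) (norm u0 ^ 2 + norm v0 ^ 2) \<alpha> \<beta> \<gamma>0 lam = 0"
    using rootI[of "norm u0" "norm v0" \<beta> \<alpha> \<gamma>0] nz \<beta> by simp
  show "\<forall>lam. lam \<in> {-1<..<1} \<and> gfun (norm u0 ^ 2 - norm v0 ^ 2) (norm u0 ^ 2 + norm v0 ^ 2) \<alpha> \<beta> \<gamma>0 lam = 0 \<longrightarrow>
           bproj \<beta> (Ctilde \<alpha> :: ('a \<times> 'a \<times> real) set) (u0, v0, \<gamma>0) = {(u0 /\<^sub>R (1 + lam), v0 /\<^sub>R (1 - lam), \<gamma>0 + lam * \<alpha> / \<beta>^2)}"
  proof (intro allI impI)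
    fix l assume h: "l \<in> {-1<..<1} \<and> gfun (norm u0 ^ 2 - norm v0 ^ 2) (norm u0 ^ 2 + norm v0 ^ 2) \<alpha> \<beta> \<gamma>0 l = 0"
    then have l: "-1 < l" "l < 1" by auto
    have g: "(norm u0)^2/(1+l)^2 - (norm v0)^2/(1-l)^2 - 2*l*\<alpha>^2/\<beta>^2 - 2*\<alpha>*\<gamma>0 = 0"
      using h gfun_eq[OF l, of "norm u0" "norm v0" \<alpha> \<beta> \<gamma>0] by simp
    have e: "2*\<alpha>*(\<gamma>0 + l * \<alpha> / \<beta>^2) = 2*l*\<alpha>^2/\<beta>^2 + 2*\<alpha>*\<gamma>0" by (simp add: power2_eq_square algebra_simps)
    have C: "(u0 /\<^sub>R (1+l), v0 /\<^sub>R (1-l), \<gamma>0 + l * \<alpha> / \<beta>^2) \<in> (Ctilde \<alpha> :: ('a \<times> 'a \<times> real) set)"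
    proof -
      have "(norm (u0 /\<^sub>R (1+l)))^2 - (norm (v0 /\<^sub>R (1-l)))^2 = 2*\<alpha>*(\<gamma>0 + l * \<alpha> / \<beta>^2)"
        unfolding ns e using g by linarith
      then show ?thesis unfolding Ctilde_def by simp
    qed
    show "bproj \<beta> (Ctilde \<alpha> :: ('a \<times> 'a \<times> real) set) (u0, v0, \<gamma>0) = {(u0 /\<^sub>R (1 + l), v0 /\<^sub>R (1 - l), \<gamma>0 + l * \<alpha> / \<beta>^2)}"
      by (rule proj_int[OF \<beta> l C])
  qed
qed

lemma partII:
  fixes v0 :: "'a::real_inner"
  assumes nt: "\<exists>x::'a. x \<noteq> 0" and \<beta>: "\<beta> > 0" and nz: "v0 \<noteq> 0"
  shows "(\<alpha> * (\<gamma>0 - \<alpha> / \<beta>^2) < - (norm v0 ^ 2) / 8 \<longrightarrow>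
         (\<exists>!lam. lam \<in> {-1<..<1} \<and> g1fun (norm v0) \<alpha> \<beta> \<gamma>0 lam = 0) \<and>
         (\<forall>lam. lam \<in> {-1<..<1} \<and> g1fun (norm v0) \<alpha> \<beta> \<gamma>0 lam = 0 \<longrightarrow>
            bproj \<beta> (Ctilde \<alpha> :: ('a \<times> 'a \<times> real) set) (0, v0, \<gamma>0) = {(0, v0 /\<^sub>R (1 - lam), \<gamma>0 + lam * \<alpha> / \<beta>^2)}))
      \<and>
      (\<alpha> * (\<gamma>0 - \<alpha> / \<beta>^2) \<ge> - (norm v0 ^ 2) / 8 \<longrightarrow>
         bproj \<beta> (Ctilde \<alpha> :: ('a \<times> 'a \<times> real) set) (0, v0, \<gamma>0) = {(u, v0 /\<^sub>R 2, \<gamma>0 - \<alpha> / \<beta>^2) | u.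
              norm u = sqrt (2 * \<alpha> * (\<gamma>0 - \<alpha> / \<beta>^2) + norm v0 ^ 2 / 4)}
         \<and> ((\<exists>w. bproj \<beta> (Ctilde \<alpha> :: ('a \<times> 'a \<times> real) set) (0, v0, \<gamma>0) = {w}) \<longleftrightarrow> \<alpha> * (\<gamma>0 - \<alpha> / \<beta>^2) = - (norm v0 ^ 2) / 8))"
proof (intro conjI impI)
  assume c: "\<alpha> * (\<gamma>0 - \<alpha> / \<beta>^2) < - (norm v0 ^ 2) / 8"
  show "\<exists>!lam. lam \<in> {-1<..<1} \<and> g1fun (norm v0) \<alpha> \<beta> \<gamma>0 lam = 0"
    using root1[of "norm v0" \<beta> \<alpha> \<gamma>0] nz \<beta> c by simp
  show "\<forall>lam. lam \<in> {-1<..<1} \<and> g1fun (norm v0) \<alpha> \<beta> \<gamma>0 lam = 0 \<longrightarrow>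
            bproj \<beta> (Ctilde \<alpha> :: ('a \<times> 'a \<times> real) set) (0, v0, \<gamma>0) = {(0, v0 /\<^sub>R (1 - lam), \<gamma>0 + lam * \<alpha> / \<beta>^2)}"
  proof (intro allI impI)
    fix l assume h: "l \<in> {-1<..<1} \<and> g1fun (norm v0) \<alpha> \<beta> \<gamma>0 l = 0"
    then have l: "-1 < l" "l < 1" by auto
    have g: "(norm v0)^2/(1-l)^2 + 2*l*\<alpha>^2/\<beta>^2 + 2*\<alpha>*\<gamma>0 = 0"
      using h unfolding g1fun_def by simp
    have e: "2*\<alpha>*(\<gamma>0 + l * \<alpha> / \<beta>^2) = 2*l*\<alpha>^2/\<beta>^2 + 2*\<alpha>*\<gamma>0" by (simp add: power2_eq_square algebra_simps)
    have C: "((0::'a) /\<^sub>R (1+l), v0 /\<^sub>R (1-l), \<gamma>0 + l * \<alpha> / \<beta>^2) \<in> (Ctilde \<alpha> :: ('a \<times> 'a \<times> real) set)"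
    proof -
      have "(norm ((0::'a) /\<^sub>R (1+l)))^2 - (norm (v0 /\<^sub>R (1-l)))^2 = 2*\<alpha>*(\<gamma>0 + l * \<alpha> / \<beta>^2)"
        unfolding ns e using g by simp
      then show ?thesis unfolding Ctilde_def by simp
    qed
    show "bproj \<beta> (Ctilde \<alpha> :: ('a \<times> 'a \<times> real) set) (0, v0, \<gamma>0) = {(0, v0 /\<^sub>R (1 - l), \<gamma>0 + l * \<alpha> / \<beta>^2)}"
      using proj_int[OF \<beta> l C] by simp
  qed
next
  assume c: "\<alpha> * (\<gamma>0 - \<alpha> / \<beta>^2) \<ge> - (norm v0 ^ 2) / 8"
  have "2 * \<alpha> * (\<gamma>0 - \<alpha> / \<beta>^2) = 2 * (\<alpha> * (\<gamma>0 - \<alpha> / \<beta>^2))" by simp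
  then have R: "2 * \<alpha> * (\<gamma>0 - \<alpha> / \<beta>^2) + norm v0 ^ 2 / 4 \<ge> 0" using c by linarith
  note pm = proj_minus[OF nt \<beta> R]
  show "bproj \<beta> (Ctilde \<alpha> :: ('a \<times> 'a \<times> real) set) (0, v0, \<gamma>0) = {(u, v0 /\<^sub>R 2, \<gamma>0 - \<alpha> / \<beta>^2) | u.
              norm u = sqrt (2 * \<alpha> * (\<gamma>0 - \<alpha> / \<beta>^2) + norm v0 ^ 2 / 4)}" by (rule pm)
  have "(\<exists>w. bproj \<beta> (Ctilde \<alpha> :: ('a \<times> 'a \<times> real) set) (0, v0, \<gamma>0) = {w}) \<longleftrightarrow>
        sqrt (2 * \<alpha> * (\<gamma>0 - \<alpha> / \<beta>^2) + norm v0 ^ 2 / 4) = 0"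
    unfolding pm by (rule sph1[OF nt], rule real_sqrt_ge_zero[OF R])
  also have "\<dots> \<longleftrightarrow> \<alpha> * (\<gamma>0 - \<alpha> / \<beta>^2) = - (norm v0 ^ 2) / 8" by auto
  finally show "(\<exists>w. bproj \<beta> (Ctilde \<alpha> :: ('a \<times> 'a \<times> real) set) (0, v0, \<gamma>0) = {w}) \<longleftrightarrow>
        \<alpha> * (\<gamma>0 - \<alpha> / \<beta>^2) = - (norm v0 ^ 2) / 8" .
qed

lemma partIII:
  fixes u0 :: "'a::real_inner"
  assumes nt: "\<exists>x::'a. x \<noteq> 0" and \<beta>: "\<beta> > 0" and nz: "u0 \<noteq> 0"
  shows "(\<alpha> * (\<gamma>0 + \<alpha> / \<beta>^2) > norm u0 ^ 2 / 8 \<longrightarrow>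
         (\<exists>!lam. lam \<in> {-1<..<1} \<and> g2fun (norm u0) \<alpha> \<beta> \<gamma>0 lam = 0) \<and>
         (\<forall>lam. lam \<in> {-1<..<1} \<and> g2fun (norm u0) \<alpha> \<beta> \<gamma>0 lam = 0 \<longrightarrow>
            bproj \<beta> (Ctilde \<alpha> :: ('a \<times> 'a \<times> real) set) (u0, 0, \<gamma>0) = {(u0 /\<^sub>R (1 + lam), 0, \<gamma>0 + lam * \<alpha> / \<beta>^2)}))
      \<and>
      (\<alpha> * (\<gamma>0 + \<alpha> / \<beta>^2) \<le> norm u0 ^ 2 / 8 \<longrightarrow>
         bproj \<beta> (Ctilde \<alpha> :: ('a \<times> 'a \<times> real) set) (u0, 0, \<gamma>0) = {(u0 /\<^sub>R 2, v, \<gamma>0 + \<alpha> / \<beta>^2) | v.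
              norm v = sqrt (- 2 * \<alpha> * (\<gamma>0 + \<alpha> / \<beta>^2) + norm u0 ^ 2 / 4)}
         \<and> ((\<exists>w. bproj \<beta> (Ctilde \<alpha> :: ('a \<times> 'a \<times> real) set) (u0, 0, \<gamma>0) = {w}) \<longleftrightarrow> \<alpha> * (\<gamma>0 + \<alpha> / \<beta>^2) = norm u0 ^ 2 / 8))"
proof (intro conjI impI)
  assume c: "\<alpha> * (\<gamma>0 + \<alpha> / \<beta>^2) > norm u0 ^ 2 / 8"
  show "\<exists>!lam. lam \<in> {-1<..<1} \<and> g2fun (norm u0) \<alpha> \<beta> \<gamma>0 lam = 0"
    using root2[of "norm u0" \<beta> \<alpha> \<gamma>0] nz \<beta> c by simp
  show "\<forall>lam. lam \<in> {-1<..<1} \<and> g2fun (norm u0) \<alpha> \<beta> \<gamma>0 lam = 0 \<longrightarrow>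
            bproj \<beta> (Ctilde \<alpha> :: ('a \<times> 'a \<times> real) set) (u0, 0, \<gamma>0) = {(u0 /\<^sub>R (1 + lam), 0, \<gamma>0 + lam * \<alpha> / \<beta>^2)}"
  proof (intro allI impI)
    fix l assume h: "l \<in> {-1<..<1} \<and> g2fun (norm u0) \<alpha> \<beta> \<gamma>0 l = 0"
    then have l: "-1 < l" "l < 1" by auto
    have g: "(norm u0)^2/(1+l)^2 - 2*l*\<alpha>^2/\<beta>^2 - 2*\<alpha>*\<gamma>0 = 0"
      using h unfolding g2fun_def by simp
    have e: "2*\<alpha>*(\<gamma>0 + l * \<alpha> / \<beta>^2) = 2*l*\<alpha>^2/\<beta>^2 + 2*\<alpha>*\<gamma>0" by (simp add: power2_eq_square algebra_simps)
    have C: "(u0 /\<^sub>R (1+l), (0::'a) /\<^sub>R (1-l), \<gamma>0 + l * \<alpha> / \<beta>^2) \<in> (Ctilde \<alpha> :: ('a \<times> 'a \<times> real) set)"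
    proof -
      have "(norm (u0 /\<^sub>R (1+l)))^2 - (norm ((0::'a) /\<^sub>R (1-l)))^2 = 2*\<alpha>*(\<gamma>0 + l * \<alpha> / \<beta>^2)"
        unfolding ns e using g by simp
      then show ?thesis unfolding Ctilde_def by simp
    qed
    show "bproj \<beta> (Ctilde \<alpha> :: ('a \<times> 'a \<times> real) set) (u0, 0, \<gamma>0) = {(u0 /\<^sub>R (1 + l), 0, \<gamma>0 + l * \<alpha> / \<beta>^2)}"
      using proj_int[OF \<beta> l C] by simp
  qed
next
  assume c: "\<alpha> * (\<gamma>0 + \<alpha> / \<beta>^2) \<le> norm u0 ^ 2 / 8"
  have i2: "- 2 * \<alpha> * (\<gamma>0 + \<alpha> / \<beta>^2) = - 2 * (\<alpha> * (\<gamma>0 + \<alpha> / \<beta>^2))" by simp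
  then have R: "- 2 * \<alpha> * (\<gamma>0 + \<alpha> / \<beta>^2) + norm u0 ^ 2 / 4 \<ge> 0" using c by linarith
  note pm = proj_plus[OF nt \<beta> R]
  show "bproj \<beta> (Ctilde \<alpha> :: ('a \<times> 'a \<times> real) set) (u0, 0, \<gamma>0) = {(u0 /\<^sub>R 2, v, \<gamma>0 + \<alpha> / \<beta>^2) | v.
              norm v = sqrt (- 2 * \<alpha> * (\<gamma>0 + \<alpha> / \<beta>^2) + norm u0 ^ 2 / 4)}" by (rule pm)
  have "(\<exists>w. bproj \<beta> (Ctilde \<alpha> :: ('a \<times> 'a \<times> real) set) (u0, 0, \<gamma>0) = {w}) \<longleftrightarrow>
        sqrt (- 2 * \<alpha> * (\<gamma>0 + \<alpha> / \<beta>^2) + norm u0 ^ 2 / 4) = 0"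
    unfolding pm by (rule sph2[OF nt], rule real_sqrt_ge_zero[OF R])
  also have "\<dots> \<longleftrightarrow> - 2 * \<alpha> * (\<gamma>0 + \<alpha> / \<beta>^2) + norm u0 ^ 2 / 4 = 0" by simp
  also have "\<dots> \<longleftrightarrow> \<alpha> * (\<gamma>0 + \<alpha> / \<beta>^2) = norm u0 ^ 2 / 8" unfolding i2 by linarith
  finally show "(\<exists>w. bproj \<beta> (Ctilde \<alpha> :: ('a \<times> 'a \<times> real) set) (u0, 0, \<gamma>0) = {w}) \<longleftrightarrow>
        \<alpha> * (\<gamma>0 + \<alpha> / \<beta>^2) = norm u0 ^ 2 / 8" .
qed

lemma partIV:
  assumes nt: "\<exists>x::'a::real_inner. x \<noteq> 0" and \<beta>: "\<beta> > 0" and \<alpha>: "\<alpha> \<noteq> 0"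
  shows "(\<alpha> * \<gamma>0 > \<alpha>^2 / \<beta>^2 \<longrightarrow>
         bproj \<beta> (Ctilde \<alpha> :: ('a \<times> 'a \<times> real) set) (0, 0, \<gamma>0) = {(u, 0, \<gamma>0 - \<alpha> / \<beta>^2) | u.
              norm u = sqrt (2 * \<alpha> * (\<gamma>0 - \<alpha> / \<beta>^2))}
         \<and> \<not> (\<exists>w. bproj \<beta> (Ctilde \<alpha> :: ('a \<times> 'a \<times> real) set) (0, 0, \<gamma>0) = {w}))
      \<and>
      (\<bar>\<alpha> * \<gamma>0\<bar> \<le> \<alpha>^2 / \<beta>^2 \<longrightarrow> bproj \<beta> (Ctilde \<alpha> :: ('a \<times> 'a \<times> real) set) (0, 0, \<gamma>0) = {(0, 0, 0)})
      \<and>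
      (\<alpha> * \<gamma>0 < - (\<alpha>^2 / \<beta>^2) \<longrightarrow>
         bproj \<beta> (Ctilde \<alpha> :: ('a \<times> 'a \<times> real) set) (0, 0, \<gamma>0) = {(0, v, \<gamma>0 + \<alpha> / \<beta>^2) | v.
              norm v = sqrt (- 2 * \<alpha> * (\<gamma>0 + \<alpha> / \<beta>^2))}
         \<and> \<not> (\<exists>w. bproj \<beta> (Ctilde \<alpha> :: ('a \<times> 'a \<times> real) set) (0, 0, \<gamma>0) = {w}))"
proof (intro conjI impI)
  have e1: "2 * \<alpha> * (\<gamma>0 - \<alpha> / \<beta>^2) = 2 * (\<alpha> * \<gamma>0) - 2 * (\<alpha>^2 / \<beta>^2)"
    by (simp add: power2_eq_square algebra_simps)
  have e2: "- 2 * \<alpha> * (\<gamma>0 + \<alpha> / \<beta>^2) = - 2 * (\<alpha> * \<gamma>0) - 2 * (\<alpha>^2 / \<beta>^2)"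
    by (simp add: power2_eq_square algebra_simps)
  {
    assume c: "\<alpha> * \<gamma>0 > \<alpha>^2 / \<beta>^2"
    then have Rp: "2 * \<alpha> * (\<gamma>0 - \<alpha> / \<beta>^2) > 0" unfolding e1 by linarith
    then have R: "2 * \<alpha> * (\<gamma>0 - \<alpha> / \<beta>^2) + norm (0::'a) ^ 2 / 4 \<ge> 0" by simp
    have pm: "bproj \<beta> (Ctilde \<alpha> :: ('a \<times> 'a \<times> real) set) (0, 0, \<gamma>0) = {(u, 0, \<gamma>0 - \<alpha> / \<beta>^2) | u.
              norm u = sqrt (2 * \<alpha> * (\<gamma>0 - \<alpha> / \<beta>^2))}"
      using proj_minus[OF nt \<beta> R] by simp
    then show "bproj \<beta> (Ctilde \<alpha> :: ('a \<times> 'a \<times> real) set) (0, 0, \<gamma>0) = {(u, 0, \<gamma>0 - \<alpha> / \<beta>^2) | u.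
              norm u = sqrt (2 * \<alpha> * (\<gamma>0 - \<alpha> / \<beta>^2))}" .
    have "(\<exists>w. bproj \<beta> (Ctilde \<alpha> :: ('a \<times> 'a \<times> real) set) (0, 0, \<gamma>0) = {w}) \<longleftrightarrow> sqrt (2 * \<alpha> * (\<gamma>0 - \<alpha> / \<beta>^2)) = 0"
      unfolding pm by (rule sph1[OF nt]) (use Rp in simp)
    then show "\<not> (\<exists>w. bproj \<beta> (Ctilde \<alpha> :: ('a \<times> 'a \<times> real) set) (0, 0, \<gamma>0) = {w})" using real_sqrt_gt_zero[OF Rp] by (metis less_irrefl)
  }
  {
    assume c: "\<bar>\<alpha> * \<gamma>0\<bar> \<le> \<alpha>^2 / \<beta>^2"
    show "bproj \<beta> (Ctilde \<alpha> :: ('a \<times> 'a \<times> real) set) (0, 0, \<gamma>0) = {(0, 0, 0)}"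
      by (rule proj_zero[OF \<beta> \<alpha> c])
  }
  {
    assume c: "\<alpha> * \<gamma>0 < - (\<alpha>^2 / \<beta>^2)"
    then have Rp: "- 2 * \<alpha> * (\<gamma>0 + \<alpha> / \<beta>^2) > 0" unfolding e2 by linarith
    then have R: "- 2 * \<alpha> * (\<gamma>0 + \<alpha> / \<beta>^2) + norm (0::'a) ^ 2 / 4 \<ge> 0" by simp
    have pm: "bproj \<beta> (Ctilde \<alpha> :: ('a \<times> 'a \<times> real) set) (0, 0, \<gamma>0) = {(0, v, \<gamma>0 + \<alpha> / \<beta>^2) | v.
              norm v = sqrt (- 2 * \<alpha> * (\<gamma>0 + \<alpha> / \<beta>^2))}"
      using proj_plus[OF nt \<beta> R] by simp
    then show "bproj \<beta> (Ctilde \<alpha> :: ('a \<times> 'a \<times> real) set) (0, 0, \<gamma>0) = {(0, v, \<gamma>0 + \<alpha> / \<beta>^2) | v.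
              norm v = sqrt (- 2 * \<alpha> * (\<gamma>0 + \<alpha> / \<beta>^2))}" .
    have "(\<exists>w. bproj \<beta> (Ctilde \<alpha> :: ('a \<times> 'a \<times> real) set) (0, 0, \<gamma>0) = {w}) \<longleftrightarrow> sqrt (- 2 * \<alpha> * (\<gamma>0 + \<alpha> / \<beta>^2)) = 0"
      unfolding pm by (rule sph2[OF nt]) (use Rp in simp)
    then show "\<not> (\<exists>w. bproj \<beta> (Ctilde \<alpha> :: ('a \<times> 'a \<times> real) set) (0, 0, \<gamma>0) = {w})" using real_sqrt_gt_zero[OF Rp] by (metis less_irrefl)
  }
qed


theorem mainTheorem1:
  fixes u0 v0 :: "'a::{real_inner, complete_space}"
    and \<alpha> \<beta> \<gamma>0 :: real
  assumes nontriv: "\<exists>x::'a. x \<noteq> 0"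
    and \<alpha>: "\<alpha> \<noteq> 0" and \<beta>: "\<beta> > 0"
  defines "P \<equiv> bproj \<beta> (Ctilde \<alpha> :: ('a \<times> 'a \<times> real) set)"
  shows
   \<comment> \<open>(i)\<close>
   "(u0 \<noteq> 0 \<and> v0 \<noteq> 0 \<longrightarrow>
      (let p = norm u0 ^ 2 - norm v0 ^ 2; q = norm u0 ^ 2 + norm v0 ^ 2 in
        (\<exists>!lam. lam \<in> {-1<..<1} \<and> gfun p q \<alpha> \<beta> \<gamma>0 lam = 0) \<and>
        (\<forall>lam. lam \<in> {-1<..<1} \<and> gfun p q \<alpha> \<beta> \<gamma>0 lam = 0 \<longrightarrow>
           P (u0, v0, \<gamma>0) = {(u0 /\<^sub>R (1 + lam), v0 /\<^sub>R (1 - lam), \<gamma>0 + lam * \<alpha> / \<beta>^2)})))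
   \<and>
   \<comment> \<open>(ii)\<close>
   (u0 = 0 \<and> v0 \<noteq> 0 \<longrightarrow>
      (\<alpha> * (\<gamma>0 - \<alpha> / \<beta>^2) < - (norm v0 ^ 2) / 8 \<longrightarrow>
         (\<exists>!lam. lam \<in> {-1<..<1} \<and> g1fun (norm v0) \<alpha> \<beta> \<gamma>0 lam = 0) \<and>
         (\<forall>lam. lam \<in> {-1<..<1} \<and> g1fun (norm v0) \<alpha> \<beta> \<gamma>0 lam = 0 \<longrightarrow>
            P (0, v0, \<gamma>0) = {(0, v0 /\<^sub>R (1 - lam), \<gamma>0 + lam * \<alpha> / \<beta>^2)}))
      \<and>
      (\<alpha> * (\<gamma>0 - \<alpha> / \<beta>^2) \<ge> - (norm v0 ^ 2) / 8 \<longrightarrow>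
         P (0, v0, \<gamma>0) = {(u, v0 /\<^sub>R 2, \<gamma>0 - \<alpha> / \<beta>^2) | u.
              norm u = sqrt (2 * \<alpha> * (\<gamma>0 - \<alpha> / \<beta>^2) + norm v0 ^ 2 / 4)}
         \<and> ((\<exists>w. P (0, v0, \<gamma>0) = {w}) \<longleftrightarrow> \<alpha> * (\<gamma>0 - \<alpha> / \<beta>^2) = - (norm v0 ^ 2) / 8)))
   \<and>
   \<comment> \<open>(iii)\<close>
   (u0 \<noteq> 0 \<and> v0 = 0 \<longrightarrow>
      (\<alpha> * (\<gamma>0 + \<alpha> / \<beta>^2) > norm u0 ^ 2 / 8 \<longrightarrow>
         (\<exists>!lam. lam \<in> {-1<..<1} \<and> g2fun (norm u0) \<alpha> \<beta> \<gamma>0 lam = 0) \<and>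
         (\<forall>lam. lam \<in> {-1<..<1} \<and> g2fun (norm u0) \<alpha> \<beta> \<gamma>0 lam = 0 \<longrightarrow>
            P (u0, 0, \<gamma>0) = {(u0 /\<^sub>R (1 + lam), 0, \<gamma>0 + lam * \<alpha> / \<beta>^2)}))
      \<and>
      (\<alpha> * (\<gamma>0 + \<alpha> / \<beta>^2) \<le> norm u0 ^ 2 / 8 \<longrightarrow>
         P (u0, 0, \<gamma>0) = {(u0 /\<^sub>R 2, v, \<gamma>0 + \<alpha> / \<beta>^2) | v.
              norm v = sqrt (- 2 * \<alpha> * (\<gamma>0 + \<alpha> / \<beta>^2) + norm u0 ^ 2 / 4)}
         \<and> ((\<exists>w. P (u0, 0, \<gamma>0) = {w}) \<longleftrightarrow> \<alpha> * (\<gamma>0 + \<alpha> / \<beta>^2) = norm u0 ^ 2 / 8)))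
   \<and>
   \<comment> \<open>(iv)\<close>
   (u0 = 0 \<and> v0 = 0 \<longrightarrow>
      (\<alpha> * \<gamma>0 > \<alpha>^2 / \<beta>^2 \<longrightarrow>
         P (0, 0, \<gamma>0) = {(u, 0, \<gamma>0 - \<alpha> / \<beta>^2) | u.
              norm u = sqrt (2 * \<alpha> * (\<gamma>0 - \<alpha> / \<beta>^2))}
         \<and> \<not> (\<exists>w. P (0, 0, \<gamma>0) = {w}))
      \<and>
      (\<bar>\<alpha> * \<gamma>0\<bar> \<le> \<alpha>^2 / \<beta>^2 \<longrightarrow> P (0, 0, \<gamma>0) = {(0, 0, 0)})
      \<and>
      (\<alpha> * \<gamma>0 < - (\<alpha>^2 / \<beta>^2) \<longrightarrow>
         P (0, 0, \<gamma>0) = {(0, v, \<gamma>0 + \<alpha> / \<beta>^2) | v.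
              norm v = sqrt (- 2 * \<alpha> * (\<gamma>0 + \<alpha> / \<beta>^2))}
         \<and> \<not> (\<exists>w. P (0, 0, \<gamma>0) = {w})))"
  proof -
  have I: "u0 \<noteq> 0 \<and> v0 \<noteq> 0 \<longrightarrow>
      (let p = norm u0 ^ 2 - norm v0 ^ 2; q = norm u0 ^ 2 + norm v0 ^ 2 in
        (\<exists>!lam. lam \<in> {-1<..<1} \<and> gfun p q \<alpha> \<beta> \<gamma>0 lam = 0) \<and>
        (\<forall>lam. lam \<in> {-1<..<1} \<and> gfun p q \<alpha> \<beta> \<gamma>0 lam = 0 \<longrightarrow>
           P (u0, v0, \<gamma>0) = {(u0 /\<^sub>R (1 + lam), v0 /\<^sub>R (1 - lam), \<gamma>0 + lam * \<alpha> / \<beta>^2)}))"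
  proof
    assume h: "u0 \<noteq> 0 \<and> v0 \<noteq> 0"
    show "let p = norm u0 ^ 2 - norm v0 ^ 2; q = norm u0 ^ 2 + norm v0 ^ 2 in
        (\<exists>!lam. lam \<in> {-1<..<1} \<and> gfun p q \<alpha> \<beta> \<gamma>0 lam = 0) \<and>
        (\<forall>lam. lam \<in> {-1<..<1} \<and> gfun p q \<alpha> \<beta> \<gamma>0 lam = 0 \<longrightarrow>
           P (u0, v0, \<gamma>0) = {(u0 /\<^sub>R (1 + lam), v0 /\<^sub>R (1 - lam), \<gamma>0 + lam * \<alpha> / \<beta>^2)})"
      unfolding P_def Let_def by (rule partI[OF \<beta>]) (use h in auto)
  qed
  have II: "u0 = 0 \<and> v0 \<noteq> 0 \<longrightarrow>
      (\<alpha> * (\<gamma>0 - \<alpha> / \<beta>^2) < - (norm v0 ^ 2) / 8 \<longrightarrow>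
         (\<exists>!lam. lam \<in> {-1<..<1} \<and> g1fun (norm v0) \<alpha> \<beta> \<gamma>0 lam = 0) \<and>
         (\<forall>lam. lam \<in> {-1<..<1} \<and> g1fun (norm v0) \<alpha> \<beta> \<gamma>0 lam = 0 \<longrightarrow>
            P (0, v0, \<gamma>0) = {(0, v0 /\<^sub>R (1 - lam), \<gamma>0 + lam * \<alpha> / \<beta>^2)}))
      \<and>
      (\<alpha> * (\<gamma>0 - \<alpha> / \<beta>^2) \<ge> - (norm v0 ^ 2) / 8 \<longrightarrow>
         P (0, v0, \<gamma>0) = {(u, v0 /\<^sub>R 2, \<gamma>0 - \<alpha> / \<beta>^2) | u.
              norm u = sqrt (2 * \<alpha> * (\<gamma>0 - \<alpha> / \<beta>^2) + norm v0 ^ 2 / 4)}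
         \<and> ((\<exists>w. P (0, v0, \<gamma>0) = {w}) \<longleftrightarrow> \<alpha> * (\<gamma>0 - \<alpha> / \<beta>^2) = - (norm v0 ^ 2) / 8))"
    unfolding P_def by (intro impI, rule partII[OF nontriv \<beta>]) auto
  have III: "u0 \<noteq> 0 \<and> v0 = 0 \<longrightarrow>
      (\<alpha> * (\<gamma>0 + \<alpha> / \<beta>^2) > norm u0 ^ 2 / 8 \<longrightarrow>
         (\<exists>!lam. lam \<in> {-1<..<1} \<and> g2fun (norm u0) \<alpha> \<beta> \<gamma>0 lam = 0) \<and>
         (\<forall>lam. lam \<in> {-1<..<1} \<and> g2fun (norm u0) \<alpha> \<beta> \<gamma>0 lam = 0 \<longrightarrow>
            P (u0, 0, \<gamma>0) = {(u0 /\<^sub>R (1 + lam), 0, \<gamma>0 + lam * \<alpha> / \<beta>^2)}))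
      \<and>
      (\<alpha> * (\<gamma>0 + \<alpha> / \<beta>^2) \<le> norm u0 ^ 2 / 8 \<longrightarrow>
         P (u0, 0, \<gamma>0) = {(u0 /\<^sub>R 2, v, \<gamma>0 + \<alpha> / \<beta>^2) | v.
              norm v = sqrt (- 2 * \<alpha> * (\<gamma>0 + \<alpha> / \<beta>^2) + norm u0 ^ 2 / 4)}
         \<and> ((\<exists>w. P (u0, 0, \<gamma>0) = {w}) \<longleftrightarrow> \<alpha> * (\<gamma>0 + \<alpha> / \<beta>^2) = norm u0 ^ 2 / 8))"
    unfolding P_def by (intro impI, rule partIII[OF nontriv \<beta>]) auto
  have IV: "u0 = 0 \<and> v0 = 0 \<longrightarrow>
      (\<alpha> * \<gamma>0 > \<alpha>^2 / \<beta>^2 \<longrightarrow>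
         P (0, 0, \<gamma>0) = {(u, 0, \<gamma>0 - \<alpha> / \<beta>^2) | u.
              norm u = sqrt (2 * \<alpha> * (\<gamma>0 - \<alpha> / \<beta>^2))}
         \<and> \<not> (\<exists>w. P (0, 0, \<gamma>0) = {w}))
      \<and>
      (\<bar>\<alpha> * \<gamma>0\<bar> \<le> \<alpha>^2 / \<beta>^2 \<longrightarrow> P (0, 0, \<gamma>0) = {(0, 0, 0)})
      \<and>
      (\<alpha> * \<gamma>0 < - (\<alpha>^2 / \<beta>^2) \<longrightarrow>
         P (0, 0, \<gamma>0) = {(0, v, \<gamma>0 + \<alpha> / \<beta>^2) | v.
              norm v = sqrt (- 2 * \<alpha> * (\<gamma>0 + \<alpha> / \<beta>^2))}
         \<and> \<not> (\<exists>w. P (0, 0, \<gamma>0) = {w}))"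
    unfolding P_def by (intro impI, rule partIV[OF nontriv \<beta> \<alpha>])
  show ?thesis by (rule conjI[OF I conjI[OF II conjI[OF III IV]]])
qed

end
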